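(* Let $\mathcal A=\{A_s\}_{s\in\mathbf S}\subset CQ(\mathbf X,\mathcal H)$ be an AVcqC ($\mathbf S$ finite) with $C_{A,d}(\mathcal A)>0$, and let $0<R<C_{A,d}(\mathcal A)$. For every sequence of $(l,M_l)$ codes $(x_i^l,D_i^l)_{i=1}^{M_l}$ with $\liminf_l\frac1l\log M_l\ge R$ and $\lim_{l\to\infty}\min_{i\in[M_l]}\min_{s^l\in\mathbf S^l}\mathrm{tr}(A_{s^l}(x_i^l)D_i^l)=1$, there is another sequence of $(l,M_l)$ codes $(x_i^l,\tilde D_i^l)_{i=1}^{M_l}$ with the same codewords and modified decoding operators such that (1) $\liminf_l\frac1l\log M_l\ge R$; (2) $\lim_{l\to\infty}\min_{i\in[M_l]}\min_{s^l\in\mathbf S^l}\mathrm{tr}(A_{s^l}(x_i^l)\tilde D_i^l)=1$; (3) for all $l\in\mathbb N$, $i\in[M_l]$ and $s^l\in\mathbf S^l$: $\mathrm{tr}(A_{s^l}(x_i^l)\tilde D_i^l)<1$.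
   Context: $\mathbf X$ finite, $\mathcal H$ finite-dimensional, $CQ(\mathbf X,\mathcal H)$ the maps $\mathbf X\to\mathcal S(\mathcal H)$; $A_{s^l}(x^l)=\bigotimes_iA_{s_i}(x_i)$. An $(l,M)$ code is $(x_i^l,D_i^l)_{i=1}^M$, $x_i^l\in\mathbf X^l$, $D_i^l\ge0$, $\sum_iD_i^l\le\mathbf 1$. $C_{A,d}(\mathcal A)$ is the supremum of rates $R'$ achievable by such codes with $\liminf_l\frac1l\log M_l\ge R'$ and $\lim_l\max_{s^l}\max_i\mathrm{tr}(A_{s^l}(x_i^l)(\mathbf 1-D_i^l))=0$ (maximal error criterion). *)

theory Defs
  imports "HOL-Analysis.Analysis"
begin

text \<open>Finite-dimensional Hilbert space H = C^d with computational basis indexed by {..<d}.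
  The l-fold tensor power H^{\<otimes>l} has basis indexed by the words of length l over {..<d};
  operators on it are represented by their matrices, i.e. functions on pairs of such words.\<close>

type_synonym op = "nat list \<Rightarrow> nat list \<Rightarrow> complex"

definition basis :: "nat \<Rightarrow> nat \<Rightarrow> nat list set" where
  "basis d l = {w. length w = l \<and> set w \<subseteq> {..<d}}"

definition idop :: op where
  "idop a b = (if a = b then 1 else 0)"

definition tr_prod :: "nat \<Rightarrow> nat \<Rightarrow> op \<Rightarrow> op \<Rightarrow> complex" where
  "tr_prod d l K L = (\<Sum>a\<in>basis d l. \<Sum>b\<in>basis d l. K a b * L b a)"

definition trace_op :: "nat \<Rightarrow> nat \<Rightarrow> op \<Rightarrow> complex" where
  "trace_op d l K = (\<Sum>a\<in>basis d l. K a a)"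

text \<open>Positive semidefinite (over C this includes being Hermitian).\<close>
definition psd :: "nat \<Rightarrow> nat \<Rightarrow> op \<Rightarrow> bool" where
  "psd d l K \<longleftrightarrow> (\<forall>v :: nat list \<Rightarrow> complex.
     (let q = (\<Sum>a\<in>basis d l. \<Sum>b\<in>basis d l. cnj (v a) * K a b * v b) in Im q = 0 \<and> 0 \<le> Re q))"

definition density :: "nat \<Rightarrow> nat \<Rightarrow> op \<Rightarrow> bool" where
  "density d l K \<longleftrightarrow> psd d l K \<and> trace_op d l K = 1"

text \<open>A cq-channel X \<rightarrow> S(H): a state (operator on H = H^{\<otimes>1}) for every input letter.\<close>
definition is_AVcqC :: "nat \<Rightarrow> ('s \<Rightarrow> 'x \<Rightarrow> op) \<Rightarrow> bool" where
  "is_AVcqC d A \<longleftrightarrow> 1 \<le> d \<and> (\<forall>s x. density d 1 (A s x))"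

definition tensor_ch :: "('s \<Rightarrow> 'x \<Rightarrow> op) \<Rightarrow> 's list \<Rightarrow> 'x list \<Rightarrow> op" where
  "tensor_ch A ss xs = (\<lambda>a b. \<Prod>k<length xs. A (ss ! k) (xs ! k) [a ! k] [b ! k])"

definition is_code :: "nat \<Rightarrow> nat \<Rightarrow> nat \<Rightarrow> (nat \<Rightarrow> 'x list) \<Rightarrow> (nat \<Rightarrow> op) \<Rightarrow> bool" where
  "is_code d l M x D \<longleftrightarrow> 1 \<le> M \<and> (\<forall>i<M. length (x i) = l \<and> psd d l (D i)) \<and>
     psd d l (\<lambda>a b. idop a b - (\<Sum>i<M. D i a b))"

definition max_err :: "nat \<Rightarrow> ('s \<Rightarrow> 'x \<Rightarrow> op) \<Rightarrow> nat \<Rightarrow> nat \<Rightarrow> (nat \<Rightarrow> 'x list) \<Rightarrow> (nat \<Rightarrow> op) \<Rightarrow> real" where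
  "max_err d A l M x D = Max {Re (tr_prod d l (tensor_ch A ss (x i)) (\<lambda>a b. idop a b - D i a b)) | i ss.
      i < M \<and> length ss = l}"

definition min_succ :: "nat \<Rightarrow> ('s \<Rightarrow> 'x \<Rightarrow> op) \<Rightarrow> nat \<Rightarrow> nat \<Rightarrow> (nat \<Rightarrow> 'x list) \<Rightarrow> (nat \<Rightarrow> op) \<Rightarrow> real" where
  "min_succ d A l M x D = Min {Re (tr_prod d l (tensor_ch A ss (x i)) (D i)) | i ss.
      i < M \<and> length ss = l}"

definition achievable :: "nat \<Rightarrow> ('s \<Rightarrow> 'x \<Rightarrow> op) \<Rightarrow> real \<Rightarrow> bool" where
  "achievable d A R' \<longleftrightarrow> (\<exists>(M :: nat \<Rightarrow> nat) (x :: nat \<Rightarrow> nat \<Rightarrow> 'x list) (D :: nat \<Rightarrow> nat \<Rightarrow> op).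
     (\<forall>l. is_code d l (M l) (x l) (D l)) \<and>
     ereal R' \<le> liminf (\<lambda>l. ereal (log 2 (real (M l)) / real l)) \<and>
     (\<lambda>l. max_err d A l (M l) (x l) (D l)) \<longlonglongrightarrow> 0)"

definition C_Ad :: "nat \<Rightarrow> ('s \<Rightarrow> 'x \<Rightarrow> op) \<Rightarrow> ereal" where
  "C_Ad d A = Sup {ereal R' | R'. achievable d A R'}"

end

theory Submission
  imports Defs
begin

definition Q :: "'i set \<Rightarrow> ('i \<Rightarrow> 'i \<Rightarrow> complex) \<Rightarrow> ('i \<Rightarrow> complex) \<Rightarrow> complex" where
  "Q S K v = (\<Sum>a\<in>S. \<Sum>b\<in>S. cnj (v a) * K a b * v b)"

definition psdS :: "'i set \<Rightarrow> ('i \<Rightarrow> 'i \<Rightarrow> complex) \<Rightarrow> bool" where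
  "psdS S K \<longleftrightarrow> (\<forall>v. Im (Q S K v) = 0 \<and> 0 \<le> Re (Q S K v))"

lemma psd_eq: "psd d l K = psdS (basis d l) K"
  unfolding psd_def psdS_def Q_def Let_def by simp

lemma Q_subset:
  assumes "finite S" "T \<subseteq> S" "\<forall>c\<in>S-T. v c = 0"
  shows "Q S K v = Q T K v"
proof -
  have "Q S K v = (\<Sum>a\<in>T. \<Sum>b\<in>S. cnj (v a) * K a b * v b)"
    unfolding Q_def using assms by (intro sum.mono_neutral_right) auto
  also have "\<dots> = Q T K v" unfolding Q_def
    using assms by (intro sum.cong refl sum.mono_neutral_right) auto
  finally show ?thesis .
qed

lemma psdS_subset:
  assumes "finite S" "psdS S K" "T \<subseteq> S"
  shows "psdS T K"
  unfolding psdS_def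
proof
  fix v :: "_ \<Rightarrow> complex"
  let ?v = "\<lambda>c. if c \<in> T then v c else 0"
  have "Q T K v = Q T K ?v" unfolding Q_def by (intro sum.cong) auto
  also have "\<dots> = Q S K ?v" using assms by (intro Q_subset[symmetric]) auto
  finally show "Im (Q T K v) = 0 \<and> 0 \<le> Re (Q T K v)" using assms(2) unfolding psdS_def by metis
qed

lemma Q_two:
  assumes "finite S" "a \<in> S" "b \<in> S" "a \<noteq> b"
  shows "Q S K (\<lambda>c. if c = a then 1 else if c = b then t else 0)
      = K a a + K a b * t + cnj t * K b a + cnj t * K b b * t"
proof -
  have "Q S K (\<lambda>c. if c = a then 1 else if c = b then t else 0)
     = Q {a,b} K (\<lambda>c. if c = a then 1 else if c = b then t else 0)"
    using assms by (intro Q_subset) auto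
  also have "\<dots> = K a a + K a b * t + cnj t * K b a + cnj t * K b b * t"
    using assms unfolding Q_def by simp
  finally show ?thesis .
qed

lemma Q_one:
  assumes "finite S" "a \<in> S"
  shows "Q S K (\<lambda>c. if c = a then 1 else 0) = K a a"
proof -
  have "Q S K (\<lambda>c. if c = a then 1 else 0) = Q {a} K (\<lambda>c. if c = a then 1 else 0)"
    using assms by (intro Q_subset) auto
  thus ?thesis unfolding Q_def by simp
qed

lemma psdS_diag:
  assumes "finite S" "psdS S K" "a \<in> S"
  shows "Im (K a a) = 0" "0 \<le> Re (K a a)"
proof -
  have "Im (Q S K (\<lambda>c. if c = a then 1 else 0)) = 0 \<and> 0 \<le> Re (Q S K (\<lambda>c. if c = a then 1 else 0))"
    using assms(2) unfolding psdS_def by blast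
  thus "Im (K a a) = 0" "0 \<le> Re (K a a)" unfolding Q_one[OF assms(1,3)] by auto
qed

lemma psdS_herm:
  assumes "finite S" "psdS S K" "a \<in> S" "b \<in> S"
  shows "K b a = cnj (K a b)"
proof (cases "a = b")
  case True
  then show ?thesis using psdS_diag[OF assms(1,2,3)] by (simp add: complex_eq_iff)
next
  case False
  have d1: "Im (K a a) = 0" "Im (K b b) = 0" using psdS_diag(1)[OF assms(1,2,3)] psdS_diag(1)[OF assms(1,2,4)] by auto
  have "Im (Q S K (\<lambda>c. if c = a then 1 else if c = b then 1 else 0)) = 0"
    using assms unfolding psdS_def by blast
  hence e1: "Im (K a b) + Im (K b a) = 0"
    using Q_two[OF assms(1,3,4) False, of K 1] d1 by simp
  have "Im (Q S K (\<lambda>c. if c = a then 1 else if c = b then \<i> else 0)) = 0"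
    using assms unfolding psdS_def by blast
  hence e2: "Re (K a b) - Re (K b a) = 0"
    using Q_two[OF assms(1,3,4) False, of K \<i>] d1 by simp
  show ?thesis using e1 e2 by (simp add: complex_eq_iff)
qed

lemma psdS_zero_col:
  assumes "finite S" "psdS S K" "a \<in> S" "c \<in> S" "K a a = 0"
  shows "K c a = 0"
proof (rule ccontr)
  assume nz: "K c a \<noteq> 0"
  hence ca: "c \<noteq> a" using assms by auto
  have h: "K a c = cnj (K c a)" using psdS_herm[OF assms(1,2,4,3)] .
  define n where "n = (cmod (K c a))^2"
  have n: "n > 0" using nz n_def by simp
  define x where "x = (Re (K c c) + 1) / (2 * n)"
  have x: "x > 0" using psdS_diag[OF assms(1,2,4)] n unfolding x_def by auto
  define t where "t = - (of_real x) * cnj (K c a)"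
  have "0 \<le> Re (Q S K (\<lambda>v. if v = c then 1 else if v = a then t else 0))"
    using assms unfolding psdS_def by blast
  also have "Q S K (\<lambda>v. if v = c then 1 else if v = a then t else 0)
      = K c c + K c a * t + cnj t * K a c + cnj t * K a a * t"
    using Q_two[OF assms(1,4,3) ca] .
  also have "\<dots> = K c c - 2 * of_real x * (K c a * cnj (K c a))"
    unfolding t_def h using assms(5) by (simp add: algebra_simps)
  also have "K c a * cnj (K c a) = of_real n" unfolding n_def
    by (metis complex_norm_square)
  finally have "0 \<le> Re (K c c) - 2 * x * n" by simp
  moreover have "2 * x * n = Re (K c c) + 1" unfolding x_def using n by simp
  ultimately show False by simp
qed

lemma Q_insert:
  assumes "finite S0" "s \<notin> S0"
  shows "Q (insert s S0) K v = cnj (v s) * K s s * v s + cnj (v s) * (\<Sum>b\<in>S0. K s b * v b)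
     + (\<Sum>a\<in>S0. cnj (v a) * K a s) * v s + Q S0 K v"
  unfolding Q_def using assms
  by (simp add: sum.distrib sum_distrib_left sum_distrib_right algebra_simps)

lemma psdS_schur:
  assumes "finite S0" "s \<notin> S0" "psdS (insert s S0) K"
  defines "k \<equiv> Re (K s s)"
  defines "u \<equiv> (\<lambda>c. if k = 0 then 0 else K c s / of_real (sqrt k))"
  shows "psdS S0 (\<lambda>a b. K a b - u a * cnj (u b))"
  unfolding psdS_def
proof
  fix v :: "_ \<Rightarrow> complex"
  have fin: "finite (insert s S0)" using assms by simp
  have kk: "K s s = of_real k" using psdS_diag[OF fin assms(3)] unfolding k_def
    by (simp add: complex_eq_iff)
  have k0: "k \<ge> 0" using psdS_diag[OF fin assms(3)] unfolding k_def by simp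
  define w where "w = (\<Sum>b\<in>S0. K s b * v b)"
  define t where "t = (if k = 0 then 0 else - w / of_real k)"
  define v' where "v' = v(s := t)"
  have v'S0: "\<And>a. a \<in> S0 \<Longrightarrow> v' a = v a" unfolding v'_def using assms(2) by auto
  have QS0: "Q S0 K v' = Q S0 K v" unfolding Q_def by (intro sum.cong refl) (simp add: v'S0)
  have sw: "(\<Sum>b\<in>S0. K s b * v' b) = w" unfolding w_def by (intro sum.cong refl) (simp add: v'S0)
  have cw: "(\<Sum>a\<in>S0. cnj (v' a) * K a s) = cnj w"
  proof -
    have "(\<Sum>a\<in>S0. cnj (v' a) * K a s) = (\<Sum>a\<in>S0. cnj (K s a * v a))"
      using psdS_herm[OF fin assms(3), of s] by (intro sum.cong refl) (simp add: v'S0)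
    thus ?thesis unfolding w_def by simp
  qed
  have QK': "Q S0 (\<lambda>a b. K a b - u a * cnj (u b)) v
     = Q S0 K v - (\<Sum>a\<in>S0. cnj (v a) * u a) * (\<Sum>b\<in>S0. cnj (u b) * v b)"
    unfolding Q_def by (simp add: sum_subtractf sum_product algebra_simps)
  have eq: "Q (insert s S0) K v' = Q S0 (\<lambda>a b. K a b - u a * cnj (u b)) v"
  proof (cases "k = 0")
    case True
    then show ?thesis unfolding QK' Q_insert[OF assms(1,2)] QS0 sw cw
      by (simp add: v'_def t_def u_def)
  next
    case False
    hence kp: "k > 0" using k0 by simp
    have r: "of_real (sqrt k) * of_real (sqrt k) = (of_real k :: complex)"
      using k0 by (simp flip: of_real_mult)
    have s1: "(\<Sum>a\<in>S0. cnj (v a) * u a) = cnj w / of_real (sqrt k)"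
      using cw False unfolding u_def by (simp add: v'S0 flip: sum_divide_distrib)
    have s2: "(\<Sum>b\<in>S0. cnj (u b) * v b) = w / of_real (sqrt k)"
    proof -
      have "(\<Sum>b\<in>S0. cnj (u b) * v b) = (\<Sum>b\<in>S0. K s b * v b / of_real (sqrt k))"
        using False psdS_herm[OF fin assms(3), of _ s] unfolding u_def
        by (intro sum.cong refl) simp
      thus ?thesis unfolding w_def by (simp add: sum_divide_distrib)
    qed
    have "Q (insert s S0) K v' = cnj t * of_real k * t + cnj t * w + cnj w * t + Q S0 K v"
      unfolding Q_insert[OF assms(1,2)] QS0 sw cw kk by (simp add: v'_def)
    also have "\<dots> = Q S0 K v - cnj w * w / of_real k"
      using kp unfolding t_def by (simp add: field_simps)
    also have "\<dots> = Q S0 (\<lambda>a b. K a b - u a * cnj (u b)) v"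
      unfolding QK' s1 s2 using r kp by (simp add: field_simps)
    finally show ?thesis .
  qed
  show "Im (Q S0 (\<lambda>a b. K a b - u a * cnj (u b)) v) = 0 \<and>
        0 \<le> Re (Q S0 (\<lambda>a b. K a b - u a * cnj (u b)) v)"
    using assms(3) unfolding psdS_def eq[symmetric] by blast
qed

lemma psdS_decomp:
  assumes "finite S"
  shows "psdS S K \<Longrightarrow> \<exists>F. \<forall>a\<in>S. \<forall>b\<in>S. K a b = (\<Sum>f\<leftarrow>F. f a * cnj (f b))"
  using assms
proof (induction S arbitrary: K rule: finite_induct)
  case empty
  then show ?case by auto
next
  case (insert s S0)
  define k where "k = Re (K s s)"
  define u where "u = (\<lambda>c. if k = 0 then 0 else K c s / of_real (sqrt k))"
  have fin: "finite (insert s S0)" using insert by simp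
  have kk: "K s s = of_real k" using psdS_diag[OF fin insert(4)] unfolding k_def
    by (simp add: complex_eq_iff)
  have k0: "k \<ge> 0" using psdS_diag[OF fin insert(4)] unfolding k_def by simp
  have "psdS S0 (\<lambda>a b. K a b - u a * cnj (u b))"
    using psdS_schur[OF insert(1,2,4)] unfolding u_def k_def .
  then obtain F' where F': "\<forall>a\<in>S0. \<forall>b\<in>S0. K a b - u a * cnj (u b) = (\<Sum>f\<leftarrow>F'. f a * cnj (f b))"
    using insert(3) by blast
  have key: "K a b = u a * cnj (u b)" if ab: "a \<in> insert s S0" "b \<in> insert s S0" "a = s \<or> b = s" for a b
  proof (cases "k = 0")
    case True
    have z: "K c s = 0" if "c \<in> insert s S0" for c
      using psdS_zero_col[OF fin insert(4) _ that] kk True by simp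
    have z2: "K s c = 0" if "c \<in> insert s S0" for c
      using psdS_herm[OF fin insert(4) that, of s] z[OF that] by simp
    show ?thesis using ab z z2 True unfolding u_def by auto
  next
    case False
    hence kp: "k > 0" using k0 by simp
    have r: "of_real (sqrt k) * of_real (sqrt k) = (of_real k :: complex)"
      using k0 by (simp flip: of_real_mult)
    have us: "u s = of_real (sqrt k)" unfolding u_def kk using False kp
      by (simp add: field_simps flip: r)
    have h: "K s b = cnj (K b s)" using psdS_herm[OF fin insert(4) ab(2), of s] by simp
    show ?thesis
    proof (cases "a = s")
      case True
      then show ?thesis using us h False unfolding u_def using r kp
        by (simp add: field_simps)
    next
      case False
      hence "b = s" using ab by auto
      then show ?thesis using us \<open>k \<noteq> 0\<close> unfolding u_def using r kp
        by (simp add: field_simps)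
    qed
  qed
  show ?case
  proof (intro exI[of _ "u # map (\<lambda>f c. if c = s then 0 else f c) F'"] ballI)
    fix a b assume ab: "a \<in> insert s S0" "b \<in> insert s S0"
    show "K a b = (\<Sum>f\<leftarrow>u # map (\<lambda>f c. if c = s then 0 else f c) F'. f a * cnj (f b))"
    proof (cases "a = s \<or> b = s")
      case True
      then show ?thesis using key[OF ab True] by (auto simp: o_def)
    next
      case False
      then have "a \<in> S0" "b \<in> S0" using ab by auto
      then show ?thesis using F' False by (simp add: o_def algebra_simps)
    qed
  qed
qed

lemma sum_list_concat_map: "sum_list (concat (map f xs)) = sum_list (map (\<lambda>x. sum_list (f x)) xs)"
  by (induction xs) auto

lemma tensor_Cons:
  "tensor_ch A (s # ss) (x # xs) (n # a) (m # b) = A s x [n] [m] * tensor_ch A ss xs a b"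
  unfolding tensor_ch_def length_Cons prod.lessThan_Suc_shift by simp

lemma tensor_Nil: "tensor_ch A ss [] a b = 1"
  unfolding tensor_ch_def by simp

lemma basis_Suc: "basis d (Suc l) = (\<lambda>(n, w). n # w) ` ({..<d} \<times> basis d l)"
  unfolding basis_def by (auto simp: length_Suc_conv image_iff)

lemma basis_0: "basis d 0 = {[]}"
  unfolding basis_def by auto

lemma basis_1: "n < d \<Longrightarrow> [n] \<in> basis d 1"
  unfolding basis_def by auto

lemma finite_basis: "finite (basis d l)"
  by (induction l) (simp_all add: basis_Suc basis_0)

lemma tensor_decomp:
  assumes "is_AVcqC d A"
  shows "length ss = length xs \<Longrightarrow> \<exists>F. \<forall>a\<in>basis d (length xs). \<forall>b\<in>basis d (length xs).
     tensor_ch A ss xs a b = (\<Sum>f\<leftarrow>F. f a * cnj (f b))"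
proof (induction xs arbitrary: ss)
  case Nil
  show ?case by (intro exI[of _ "[\<lambda>_. 1]"]) (simp add: tensor_Nil)
next
  case (Cons x xs)
  then obtain s ss' where ss: "ss = s # ss'" "length ss' = length xs" by (cases ss) auto
  obtain F' where F': "\<forall>a\<in>basis d (length xs). \<forall>b\<in>basis d (length xs).
     tensor_ch A ss' xs a b = (\<Sum>f\<leftarrow>F'. f a * cnj (f b))" using Cons(1)[OF ss(2)] by blast
  have "psdS (basis d 1) (A s x)" using assms unfolding is_AVcqC_def density_def psd_eq by blast
  moreover have "finite (basis d 1)" by (rule finite_basis)
  ultimately obtain G where G: "\<forall>a\<in>basis d 1. \<forall>b\<in>basis d 1. A s x a b = (\<Sum>g\<leftarrow>G. g a * cnj (g b))"
    using psdS_decomp by blast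
  show ?case
  proof (intro exI[of _ "concat (map (\<lambda>g. map (\<lambda>f c. g [hd c] * f (tl c)) F') G)"] ballI)
    fix a b assume ab: "a \<in> basis d (length (x # xs))" "b \<in> basis d (length (x # xs))"
    then obtain n a' m b' where nm: "a = n # a'" "b = m # b'" "n < d" "m < d"
      "a' \<in> basis d (length xs)" "b' \<in> basis d (length xs)"
      by (auto simp: basis_Suc)
    have "tensor_ch A ss (x # xs) a b = A s x [n] [m] * tensor_ch A ss' xs a' b'"
      unfolding nm ss by (rule tensor_Cons)
    also have "\<dots> = (\<Sum>g\<leftarrow>G. g [n] * cnj (g [m])) * (\<Sum>f\<leftarrow>F'. f a' * cnj (f b'))"
      using G F' nm basis_1 by simp
    also have "\<dots> = (\<Sum>g\<leftarrow>G. (g [n] * cnj (g [m])) * (\<Sum>f\<leftarrow>F'. f a' * cnj (f b')))"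
      by (rule sum_list_mult_const[symmetric])
    also have "\<dots> = (\<Sum>g\<leftarrow>G. \<Sum>f\<leftarrow>F'. (g [n] * cnj (g [m])) * (f a' * cnj (f b')))"
      by (simp only: sum_list_const_mult)
    also have "\<dots> = (\<Sum>g\<leftarrow>G. \<Sum>f\<leftarrow>F'. (g [n] * f a') * cnj (g [m] * f b'))"
      by (simp add: algebra_simps)
    also have "\<dots> = (\<Sum>h\<leftarrow>concat (map (\<lambda>g. map (\<lambda>f c. g [hd c] * f (tl c)) F') G). h a * cnj (h b))"
      unfolding map_concat sum_list_concat_map by (simp add: nm o_def)
    finally show "tensor_ch A ss (x # xs) a b = (\<Sum>h\<leftarrow>concat (map (\<lambda>g. map (\<lambda>f c. g [hd c] * f (tl c)) F') G). h a * cnj (h b))" .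
  qed
qed

lemma basis_1_eq: "basis d 1 = (\<lambda>n. [n]) ` {..<d}"
  using basis_Suc[of d 0] unfolding basis_0 by auto

lemma tensor_trace:
  assumes "is_AVcqC d A"
  shows "length ss = length xs \<Longrightarrow> (\<Sum>a\<in>basis d (length xs). tensor_ch A ss xs a a) = 1"
proof (induction xs arbitrary: ss)
  case Nil
  show ?case by (simp add: basis_0 tensor_Nil)
next
  case (Cons x xs)
  then obtain s ss' where ss: "ss = s # ss'" "length ss' = length xs" by (cases ss) auto
  have tr1: "(\<Sum>n<d. A s x [n] [n]) = 1"
  proof -
    have "trace_op d 1 (A s x) = 1" using assms unfolding is_AVcqC_def density_def by blast
    moreover have "trace_op d 1 (A s x) = (\<Sum>n<d. A s x [n] [n])"
      unfolding trace_op_def basis_1_eq by (subst sum.reindex) (auto simp: inj_on_def)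
    ultimately show ?thesis by simp
  qed
  have inj: "inj_on (\<lambda>(n, w). n # w) ({..<d} \<times> basis d (length xs))"
    by (auto simp: inj_on_def)
  have "(\<Sum>a\<in>basis d (length (x # xs)). tensor_ch A ss (x # xs) a a)
      = (\<Sum>(n, w)\<in>{..<d} \<times> basis d (length xs). A s x [n] [n] * tensor_ch A ss' xs w w)"
    unfolding length_Cons basis_Suc by (subst sum.reindex[OF inj]) (simp add: ss tensor_Cons case_prod_beta)
  also have "\<dots> = (\<Sum>n<d. A s x [n] [n]) * (\<Sum>w\<in>basis d (length xs). tensor_ch A ss' xs w w)"
    by (simp add: sum_product sum.cartesian_product)
  also have "\<dots> = 1" using tr1 Cons(1)[OF ss(2)] by simp
  finally show ?case .
qed

lemma sum_sum_list_swap: "(\<Sum>a\<in>S. \<Sum>f\<leftarrow>F. g f a) = (\<Sum>f\<leftarrow>F. \<Sum>a\<in>S. g f a)"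
  by (induction F) (simp_all add: sum.distrib)

lemma Re_sum_list_nonneg: "(\<And>f. f \<in> set F \<Longrightarrow> 0 \<le> Re (g f)) \<Longrightarrow> 0 \<le> Re (\<Sum>f\<leftarrow>F. g f)"
  by (induction F) auto

lemma tr_prod_nonneg:
  assumes "is_AVcqC d A" "length ss = l" "length xs = l" "psd d l P"
  shows "0 \<le> Re (tr_prod d l (tensor_ch A ss xs) P)"
proof -
  obtain F where F: "\<forall>a\<in>basis d l. \<forall>b\<in>basis d l. tensor_ch A ss xs a b = (\<Sum>f\<leftarrow>F. f a * cnj (f b))"
    using tensor_decomp[OF assms(1), of ss xs] assms(2,3) by auto
  have "tr_prod d l (tensor_ch A ss xs) P = (\<Sum>a\<in>basis d l. \<Sum>b\<in>basis d l. \<Sum>f\<leftarrow>F. f a * cnj (f b) * P b a)"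
    unfolding tr_prod_def using F by (intro sum.cong refl) (simp add: sum_list_mult_const)
  also have "\<dots> = (\<Sum>f\<leftarrow>F. Q (basis d l) P f)"
    unfolding Q_def sum_sum_list_swap
    by (subst sum.swap) (simp add: algebra_simps)
  finally have eq: "tr_prod d l (tensor_ch A ss xs) P = (\<Sum>f\<leftarrow>F. Q (basis d l) P f)" .
  show ?thesis unfolding eq
    using assms(4) unfolding psd_eq psdS_def by (intro Re_sum_list_nonneg) blast
qed

lemma tr_prod_idop_minus:
  assumes "finite J"
  shows "tr_prod d l T (\<lambda>a b. idop a b - (\<Sum>j\<in>J. D j a b))
     = (\<Sum>a\<in>basis d l. T a a) - (\<Sum>j\<in>J. tr_prod d l T (D j))"
proof -
  have "tr_prod d l T (\<lambda>a b. idop a b - (\<Sum>j\<in>J. D j a b))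
     = (\<Sum>a\<in>basis d l. \<Sum>b\<in>basis d l. T a b * idop b a) - (\<Sum>a\<in>basis d l. \<Sum>b\<in>basis d l. \<Sum>j\<in>J. T a b * D j b a)"
    unfolding tr_prod_def by (simp add: right_diff_distrib sum_subtractf sum_distrib_left)
  also have "(\<Sum>a\<in>basis d l. \<Sum>b\<in>basis d l. T a b * idop b a) = (\<Sum>a\<in>basis d l. T a a)"
    unfolding idop_def using finite_basis[of d l] by (simp add: if_distrib cong: if_cong)
  also have "(\<Sum>a\<in>basis d l. \<Sum>b\<in>basis d l. \<Sum>j\<in>J. T a b * D j b a) = (\<Sum>j\<in>J. tr_prod d l T (D j))"
    unfolding tr_prod_def by (simp add: sum.swap[of _ J])
  finally show ?thesis .
qed

lemma succ_le_1:
  assumes "is_AVcqC d A" "is_code d l M x D" "i < M" "length ss = l"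
  shows "Re (tr_prod d l (tensor_ch A ss (x i)) (D i)) \<le> 1"
proof -
  let ?T = "tensor_ch A ss (x i)"
  have lx: "length (x i) = l" using assms unfolding is_code_def by blast
  have nn: "0 \<le> Re (tr_prod d l ?T (D j))" if "j < M" for j
  proof -
    have "length (x i) = l" "psd d l (D j)" using assms that unfolding is_code_def by blast+
    thus ?thesis using tr_prod_nonneg[OF assms(1,4)] by blast
  qed
  have "0 \<le> Re (tr_prod d l ?T (\<lambda>a b. idop a b - (\<Sum>j<M. D j a b)))"
    using assms lx tr_prod_nonneg[OF assms(1,4) lx] unfolding is_code_def by blast
  also have "tr_prod d l ?T (\<lambda>a b. idop a b - (\<Sum>j<M. D j a b)) = 1 - (\<Sum>j<M. tr_prod d l ?T (D j))"
    unfolding tr_prod_idop_minus[OF finite_lessThan] using tensor_trace[OF assms(1), of ss "x i"] lx assms(4) by simp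
  finally have "(\<Sum>j<M. Re (tr_prod d l ?T (D j))) \<le> 1" by (simp add: Re_sum)
  moreover have "Re (tr_prod d l ?T (D i)) \<le> (\<Sum>j<M. Re (tr_prod d l ?T (D j)))"
    using nn assms(3) by (intro member_le_sum) auto
  ultimately show ?thesis by simp
qed

lemma Q_scale: "Q S (\<lambda>a b. of_real c * K a b) v = of_real c * Q S K v"
  unfolding Q_def by (simp add: sum_distrib_left algebra_simps)

lemma psdS_scale: "psdS S K \<Longrightarrow> 0 \<le> c \<Longrightarrow> psdS S (\<lambda>a b. of_real c * K a b)"
  unfolding psdS_def Q_scale by simp

lemma Q_idop: "finite S \<Longrightarrow> Q S idop v = (\<Sum>a\<in>S. of_real ((cmod (v a))^2))"
proof -
  assume fin: "finite S"
  have "Q S idop v = (\<Sum>a\<in>S. \<Sum>b\<in>S. if b = a then cnj (v a) * v b else 0)"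
    unfolding Q_def idop_def by (intro sum.cong refl) auto
  also have "\<dots> = (\<Sum>a\<in>S. cnj (v a) * v a)" using fin by simp
  also have "\<dots> = (\<Sum>a\<in>S. of_real ((cmod (v a))^2))"
    by (intro sum.cong refl) (metis complex_norm_square mult.commute)
  finally show ?thesis .
qed

lemma code_scale:
  assumes "is_code d l M x D" "0 \<le> c" "c \<le> 1"
  shows "is_code d l M x (\<lambda>i a b. of_real c * D i a b)"
proof -
  have "psd d l (\<lambda>a b. idop a b - (\<Sum>i<M. of_real c * D i a b))"
    unfolding psd_eq psdS_def
  proof
    fix v :: "_ \<Rightarrow> complex"
    have eq: "Q (basis d l) (\<lambda>a b. idop a b - (\<Sum>i<M. of_real c * D i a b)) v
       = of_real (1 - c) * Q (basis d l) idop v + of_real c * Q (basis d l) (\<lambda>a b. idop a b - (\<Sum>i<M. D i a b)) v"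
      unfolding Q_def by (simp add: sum_distrib_left algebra_simps sum.distrib sum_subtractf)
    have p: "Im (Q (basis d l) (\<lambda>a b. idop a b - (\<Sum>i<M. D i a b)) v) = 0 \<and>
          0 \<le> Re (Q (basis d l) (\<lambda>a b. idop a b - (\<Sum>i<M. D i a b)) v)"
      using assms(1) unfolding is_code_def psd_eq psdS_def by blast
    have q: "Im (Q (basis d l) idop v) = 0" "0 \<le> Re (Q (basis d l) idop v)"
      unfolding Q_idop[OF finite_basis] by (simp_all add: sum_nonneg)
    show "Im (Q (basis d l) (\<lambda>a b. idop a b - (\<Sum>i<M. of_real c * D i a b)) v) = 0 \<and>
          0 \<le> Re (Q (basis d l) (\<lambda>a b. idop a b - (\<Sum>i<M. of_real c * D i a b)) v)"
      unfolding eq using p q assms(2,3) by simp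
  qed
  then show ?thesis using assms(1,2) unfolding is_code_def psd_eq by (auto intro: psdS_scale)
qed

lemma Min_scale:
  fixes S :: "real set"
  assumes "finite S" "S \<noteq> {}" "0 \<le> c"
  shows "Min ((\<lambda>t. c * t) ` S) = c * Min S"
  using mono_Min_commute[of "\<lambda>t. c * t", OF _ assms(1,2)] assms(3)
  by (simp add: mono_def mult_left_mono)

lemma tr_prod_scale: "tr_prod d l T (\<lambda>a b. of_real c * D a b) = of_real c * tr_prod d l T D"
  unfolding tr_prod_def by (simp add: sum_distrib_left algebra_simps)

theorem lemma11:
  fixes d :: nat and A :: "'s::finite \<Rightarrow> 'x::finite \<Rightarrow> op" and R :: real
    and M :: "nat \<Rightarrow> nat" and x :: "nat \<Rightarrow> nat \<Rightarrow> 'x list" and D :: "nat \<Rightarrow> nat \<Rightarrow> op"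
  assumes "is_AVcqC d A"
    and "0 < C_Ad d A"
    and "0 < R" and "ereal R < C_Ad d A"
    and "\<forall>l. is_code d l (M l) (x l) (D l)"
    and "ereal R \<le> liminf (\<lambda>l. ereal (log 2 (real (M l)) / real l))"
    and "(\<lambda>l. min_succ d A l (M l) (x l) (D l)) \<longlonglongrightarrow> 1"
  shows "\<exists>D' :: nat \<Rightarrow> nat \<Rightarrow> op.
           (\<forall>l. is_code d l (M l) (x l) (D' l)) \<and>
           ereal R \<le> liminf (\<lambda>l. ereal (log 2 (real (M l)) / real l)) \<and>
           (\<lambda>l. min_succ d A l (M l) (x l) (D' l)) \<longlonglongrightarrow> 1 \<and>
           (\<forall>l i ss. i < M l \<and> length ss = l \<longrightarrow>
              Re (tr_prod d l (tensor_ch A ss (x l i)) (D' l i)) < 1)"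
proof -
  define c where "c = (\<lambda>l::nat. 1 - inverse (real (Suc (Suc l))))"
  have c0: "0 \<le> c l" for l
  proof -
    have "inverse (real (Suc (Suc l))) \<le> 1" by (simp add: field_simps)
    thus ?thesis unfolding c_def by simp
  qed
  have c1: "c l < 1" for l unfolding c_def by simp
  have clim: "c \<longlonglongrightarrow> 1"
  proof -
    have "(\<lambda>l. inverse (real (Suc (Suc l)))) \<longlonglongrightarrow> 0"
      using LIMSEQ_Suc[OF LIMSEQ_inverse_real_of_nat] .
    hence "(\<lambda>l. 1 - inverse (real (Suc (Suc l)))) \<longlonglongrightarrow> 1 - 0"
      by (intro tendsto_diff tendsto_const)
    thus ?thesis unfolding c_def by simp
  qed
  define D' where "D' = (\<lambda>l i a b. of_real (c l) * D l i a b)"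
  have code: "is_code d l (M l) (x l) (D' l)" for l
    unfolding D'_def using code_scale[OF assms(5)[rule_format, of l] c0 less_imp_le[OF c1]] .
  have ms: "min_succ d A l (M l) (x l) (D' l) = c l * min_succ d A l (M l) (x l) (D l)" for l
  proof -
    define S where "S = {Re (tr_prod d l (tensor_ch A ss (x l i)) (D l i)) | i ss. i < M l \<and> length ss = l}"
    have fin: "finite S"
    proof -
      have "S \<subseteq> (\<lambda>(i, ss). Re (tr_prod d l (tensor_ch A ss (x l i)) (D l i))) `
               ({..<M l} \<times> {ss. set ss \<subseteq> UNIV \<and> length ss = l})"
        unfolding S_def by auto
      moreover have "finite ({..<M l} \<times> {ss :: 's list. set ss \<subseteq> UNIV \<and> length ss = l})"
        by (intro finite_cartesian_product finite_lessThan finite_lists_length_eq) simp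
      ultimately show ?thesis by (meson finite_imageI finite_subset)
    qed
    have ne: "S \<noteq> {}"
    proof -
      have "0 < M l" using assms(5)[rule_format, of l] unfolding is_code_def by simp
      hence "Re (tr_prod d l (tensor_ch A (replicate l undefined) (x l 0)) (D l 0)) \<in> S"
        unfolding S_def by force
      thus ?thesis by blast
    qed
    have "{Re (tr_prod d l (tensor_ch A ss (x l i)) (D' l i)) | i ss. i < M l \<and> length ss = l}
        = (\<lambda>t. c l * t) ` S"
      unfolding S_def D'_def tr_prod_scale by auto
    thus ?thesis unfolding min_succ_def S_def[symmetric] using Min_scale[OF fin ne c0] by simp
  qed
  have lim: "(\<lambda>l. min_succ d A l (M l) (x l) (D' l)) \<longlonglongrightarrow> 1"
    unfolding ms using tendsto_mult[OF clim assms(7)] by simp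
  have strict: "Re (tr_prod d l (tensor_ch A ss (x l i)) (D' l i)) < 1" if "i < M l" "length ss = l" for l i ss
  proof -
    have le: "Re (tr_prod d l (tensor_ch A ss (x l i)) (D l i)) \<le> 1"
      using succ_le_1[OF assms(1) assms(5)[rule_format, of l] that] .
    have "Re (tr_prod d l (tensor_ch A ss (x l i)) (D' l i)) = c l * Re (tr_prod d l (tensor_ch A ss (x l i)) (D l i))"
      unfolding D'_def tr_prod_scale by simp
    also have "\<dots> \<le> c l" using mult_left_mono[OF le c0] by simp
    also have "\<dots> < 1" by (rule c1)
    finally show ?thesis .
  qed
  show ?thesis using code lim strict assms(6) by blast
qed

end
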